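(* In the on-policy TD$(n)$ setting of the context, suppose $\epsilon_k\equiv\epsilon\le\frac{1-\beta^n}{16(1+\beta^{2n})}$. Then for all $k\ge0$, $$\mathbb{E}[\|V_k-V_\pi\|_\Lambda^2]\le\|V_0-V_\pi\|_\Lambda^2(1-(1-\beta^n)\epsilon)^k+\frac{8}{1-\beta^n}\left(\frac{(1-\beta^n)^2}{(1-\beta)^2}+2\beta^{2n}\|V_\pi\|_\Lambda^2\right)\epsilon.$$
   Context: Finite MDP: finite state space $\mathcal S$, finite action space $\mathcal A$, transition matrices $P_a$, reward $\mathcal R:\mathcal S\times\mathcal A\to[0,1]$, discount $\beta\in(0,1)$. Fix a policy $\pi$ with value function $V_\pi(s)=\mathbb{E}_\pi[\sum_{k\ge0}\beta^k\mathcal R(S_k,A_k)\mid S_0=s]$, and assume the Markov chain $\{S_k\}$ under $\pi$ has a unique stationary distribution $\lambda$ with $\lambda(s)>0$ for all $s$. Let $\Lambda=\mathrm{diag}(\lambda)$ and $\|V\|_\Lambda=(V^\top\Lambda V)^{1/2}$. Fix $n\ge1$. TD$(n)$: from deterministic $V_0$, at each iteration $k$ and for each $s$, a fresh trajectory $S_0^s=s,A_0^s,\dots,S_n^s$ is sampled under $\pi$ (independently of the past given the current iterate), and $V_{k+1}(s)=V_k(s)+\epsilon_k(\sum_{t=0}^{n-1}\beta^t\mathcal R(S_t^s,A_t^s)+\beta^nV_k(S_n^s)-V_k(s))$. *)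

theory Defs
  imports "HOL-Probability.Probability"
begin

definition chain_step :: "('s \<Rightarrow> 'a pmf) \<Rightarrow> ('s \<Rightarrow> 'a \<Rightarrow> 's pmf) \<Rightarrow> 's \<Rightarrow> 's pmf" where
  "chain_step pol P s = bind_pmf (pol s) (\<lambda>a. P s a)"

definition stationary :: "('s \<Rightarrow> 'a pmf) \<Rightarrow> ('s \<Rightarrow> 'a \<Rightarrow> 's pmf) \<Rightarrow> 's pmf \<Rightarrow> bool" where
  "stationary pol P mu \<longleftrightarrow> bind_pmf mu (chain_step pol P) = mu"

text \<open>Distribution of a length-m trajectory S_0 = s, A_0, S_1, ..., A_(m-1), S_m under pi:
  the list of state-action pairs (S_t, A_t), t < m, together with the final state S_m.\<close>
fun traj :: "('s \<Rightarrow> 'a pmf) \<Rightarrow> ('s \<Rightarrow> 'a \<Rightarrow> 's pmf) \<Rightarrow> 's \<Rightarrow> nat \<Rightarrow> ((('s \<times> 'a) list) \<times> 's) pmf" where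
  "traj pol P s 0 = return_pmf ([], s)"
| "traj pol P s (Suc m) =
     bind_pmf (pol s) (\<lambda>a. bind_pmf (P s a) (\<lambda>s'.
       map_pmf (\<lambda>(xs, sm). ((s, a) # xs, sm)) (traj pol P s' m)))"

definition disc_return :: "('s \<Rightarrow> 'a \<Rightarrow> real) \<Rightarrow> real \<Rightarrow> ('s \<times> 'a) list \<Rightarrow> real" where
  "disc_return R \<beta> xs = (\<Sum>t<length xs. \<beta> ^ t * R (fst (xs ! t)) (snd (xs ! t)))"

definition value_fun :: "('s \<Rightarrow> 'a pmf) \<Rightarrow> ('s \<Rightarrow> 'a \<Rightarrow> 's pmf) \<Rightarrow> ('s \<Rightarrow> 'a \<Rightarrow> real) \<Rightarrow> real \<Rightarrow> 's \<Rightarrow> real" where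
  "value_fun pol P R \<beta> s =
     lim (\<lambda>m. measure_pmf.expectation (traj pol P s m) (\<lambda>(xs, sm). disc_return R \<beta> xs))"

definition lnorm_sq :: "'s::finite pmf \<Rightarrow> ('s \<Rightarrow> real) \<Rightarrow> real" where
  "lnorm_sq lam V = (\<Sum>s\<in>UNIV. pmf lam s * (V s)\<^sup>2)"

text \<open>One TD(n) iteration with step size eps: for every state s an independent fresh
  n-step trajectory from s is drawn, and V(s) is updated with the n-step target.\<close>
definition td_step :: "('s::finite \<Rightarrow> 'a pmf) \<Rightarrow> ('s \<Rightarrow> 'a \<Rightarrow> 's pmf) \<Rightarrow> ('s \<Rightarrow> 'a \<Rightarrow> real)
    \<Rightarrow> real \<Rightarrow> nat \<Rightarrow> real \<Rightarrow> ('s \<Rightarrow> real) \<Rightarrow> ('s \<Rightarrow> real) pmf" where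
  "td_step pol P R \<beta> n eps V =
     map_pmf (\<lambda>tr s. V s + eps * (disc_return R \<beta> (fst (tr s)) + \<beta> ^ n * V (snd (tr s)) - V s))
       (Pi_pmf UNIV undefined (\<lambda>s. traj pol P s n))"

fun td_iter :: "('s::finite \<Rightarrow> 'a pmf) \<Rightarrow> ('s \<Rightarrow> 'a \<Rightarrow> 's pmf) \<Rightarrow> ('s \<Rightarrow> 'a \<Rightarrow> real)
    \<Rightarrow> real \<Rightarrow> nat \<Rightarrow> real \<Rightarrow> ('s \<Rightarrow> real) \<Rightarrow> nat \<Rightarrow> ('s \<Rightarrow> real) pmf" where
  "td_iter pol P R \<beta> n eps V0 0 = return_pmf V0"
| "td_iter pol P R \<beta> n eps V0 (Suc k) =
     bind_pmf (td_iter pol P R \<beta> n eps V0 k) (td_step pol P R \<beta> n eps)"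

end

theory Submission
  imports Defs
begin

abbreviation E :: "'b pmf \<Rightarrow> ('b \<Rightarrow> real) \<Rightarrow> real" where
  "E M f \<equiv> measure_pmf.expectation M f"

lemma integral_bind_pmf_fin:
  fixes f :: "'b \<Rightarrow> real"
  assumes M: "finite (set_pmf M)" and N: "\<And>x. x \<in> set_pmf M \<Longrightarrow> finite (set_pmf (N x))"
  shows "E (bind_pmf M N) f = E M (\<lambda>x. E (N x) f)"
proof -
  define S where "S = (\<Union>x\<in>set_pmf M. set_pmf (N x))"
  have S: "finite S" using M N by (auto simp: S_def)
  have "E (bind_pmf M N) f = (\<Sum>y\<in>S. f y * pmf (bind_pmf M N) y)"
    by (rule integral_measure_pmf_real) (use S in \<open>auto simp: S_def\<close>)
  also have "\<dots> = (\<Sum>y\<in>S. f y * (\<Sum>x\<in>set_pmf M. pmf (N x) y * pmf M x))"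
    unfolding pmf_bind
    by (intro sum.cong refl arg_cong2[where f="(*)"] integral_measure_pmf_real M) auto
  also have "\<dots> = (\<Sum>x\<in>set_pmf M. (\<Sum>y\<in>S. f y * pmf (N x) y) * pmf M x)"
    unfolding sum_distrib_left sum_distrib_right
    by (subst sum.swap) (simp add: mult_ac)
  also have "\<dots> = (\<Sum>x\<in>set_pmf M. E (N x) f * pmf M x)"
    by (intro sum.cong refl arg_cong2[where f="(*)"] integral_measure_pmf_real[symmetric] S)
       (auto simp: S_def)
  also have "\<dots> = E M (\<lambda>x. E (N x) f)"
    by (rule integral_measure_pmf_real[symmetric]) (use M in auto)
  finally show ?thesis .
qed

lemma E_lin:
  assumes "finite (set_pmf M)"
  shows "E M (\<lambda>x. c + b * g x) = c + b * E M g"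
  using assms by (simp add: integrable_measure_pmf_finite)

lemma traj_len: "x \<in> set_pmf (traj pol P s m) \<Longrightarrow> length (fst x) = m"
  by (induction m arbitrary: s x) auto

lemma finite_traj:
  fixes pol :: "'s::finite \<Rightarrow> 'a::finite pmf"
  shows "finite (set_pmf (traj pol P s m))"
proof (rule finite_subset)
  show "set_pmf (traj pol P s m) \<subseteq> {xs. set xs \<subseteq> UNIV \<and> length xs = m} \<times> UNIV"
    using traj_len by fastforce
  show "finite ({xs. set xs \<subseteq> (UNIV::('s\<times>'a) set) \<and> length xs = m} \<times> (UNIV :: 's set))"
    by (intro finite_cartesian_product finite_lists_length_eq) auto
qed

lemma traj_Suc_E:
  fixes pol :: "'s::finite \<Rightarrow> 'a::finite pmf"
  shows "E (traj pol P s (Suc m)) f =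
    E (pol s) (\<lambda>a. E (P s a) (\<lambda>s'. E (traj pol P s' m) (\<lambda>x. f ((s,a) # fst x, snd x))))"
  by (simp add: integral_bind_pmf_fin finite_traj case_prod_unfold)

lemma dr_cons: "disc_return R \<beta> ((s,a) # xs) = R s a + \<beta> * disc_return R \<beta> xs"
  unfolding disc_return_def length_Cons sum.lessThan_Suc_shift
  by (simp add: sum_distrib_left mult_ac)

lemma E_mono:
  assumes "finite (set_pmf M)" "\<And>x. f x \<le> g x"
  shows "E M f \<le> E M g"
  using assms by (intro integral_mono) (auto simp: integrable_measure_pmf_finite)

lemma E_const: "E M (\<lambda>x. c) = c"
  by simp

definition vtr where
  "vtr pol P R \<beta> m s = E (traj pol P s m) (\<lambda>(xs, sm). disc_return R \<beta> xs)"

lemma vtr_0: "vtr pol P R \<beta> 0 s = 0"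
  by (simp add: vtr_def disc_return_def)

lemma vtr_Suc:
  fixes pol :: "'s::finite \<Rightarrow> 'a::finite pmf"
  shows "vtr pol P R \<beta> (Suc m) s = E (pol s) (\<lambda>a. E (P s a) (\<lambda>s'. R s a + \<beta> * vtr pol P R \<beta> m s'))"
  unfolding vtr_def traj_Suc_E
  by (simp add: dr_cons case_prod_unfold E_lin finite_traj)

lemma vtr_mono:
  fixes pol :: "'s::finite \<Rightarrow> 'a::finite pmf"
  assumes R: "\<And>s a. 0 \<le> R s a" and b: "0 \<le> \<beta>"
  shows "vtr pol P R \<beta> m s \<le> vtr pol P R \<beta> (Suc m) s"
proof (induction m arbitrary: s)
  case 0
  then show ?case
    by (simp add: vtr_Suc vtr_0 R integral_nonneg)
next
  case (Suc m)
  show ?case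
    by (subst (1 2) vtr_Suc) (intro E_mono finite add_left_mono mult_left_mono Suc b)
qed

lemma vtr_bounds:
  fixes pol :: "'s::finite \<Rightarrow> 'a::finite pmf"
  assumes R: "\<And>s a. 0 \<le> R s a \<and> R s a \<le> 1" and b: "0 \<le> \<beta>" "\<beta> < 1"
  shows "0 \<le> vtr pol P R \<beta> m s \<and> vtr pol P R \<beta> m s \<le> 1 / (1 - \<beta>)"
proof (induction m arbitrary: s)
  case 0
  then show ?case using b by (simp add: vtr_0)
next
  case (Suc m)
  have "vtr pol P R \<beta> (Suc m) s \<le> E (pol s) (\<lambda>a. E (P s a) (\<lambda>s'. 1 / (1 - \<beta>)))"
    unfolding vtr_Suc
  proof (intro E_mono finite)
    fix a s'
    have "R s a + \<beta> * vtr pol P R \<beta> m s' \<le> 1 + \<beta> * (1 / (1 - \<beta>))"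
      using R[of s a] Suc[of s'] b by (intro add_mono mult_left_mono) auto
    also have "\<dots> = 1 / (1 - \<beta>)" using b by (simp add: field_simps)
    finally show "R s a + \<beta> * vtr pol P R \<beta> m s' \<le> 1 / (1 - \<beta>)" .
  qed
  moreover have "0 \<le> vtr pol P R \<beta> (Suc m) s"
    unfolding vtr_Suc by (intro Bochner_Integration.integral_nonneg add_nonneg_nonneg mult_nonneg_nonneg) (use R Suc b in auto)
  ultimately show ?case by simp
qed

lemma vtr_conv:
  fixes pol :: "'s::finite \<Rightarrow> 'a::finite pmf"
  assumes R: "\<And>s a. 0 \<le> R s a \<and> R s a \<le> 1" and b: "0 \<le> \<beta>" "\<beta> < 1"
  shows "(\<lambda>m. vtr pol P R \<beta> m s) \<longlonglongrightarrow> value_fun pol P R \<beta> s"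
proof -
  have inc: "incseq (\<lambda>m. vtr pol P R \<beta> m s)"
    by (rule incseq_SucI, rule vtr_mono) (use R b in auto)
  have "convergent (\<lambda>m. vtr pol P R \<beta> m s)"
  proof -
    have "\<forall>i. vtr pol P R \<beta> i s \<le> 1/(1-\<beta>)" using vtr_bounds[of R \<beta> pol P] R b by blast
    then show ?thesis using incseq_convergent[OF inc, of "1/(1-\<beta>)"] unfolding convergent_def by blast
  qed
  then show ?thesis
    unfolding value_fun_def vtr_def[symmetric] by (simp add: convergent_LIMSEQ_iff)
qed

lemma vtr_add:
  fixes pol :: "'s::finite \<Rightarrow> 'a::finite pmf"
  shows "vtr pol P R \<beta> (n + m) s =
    E (traj pol P s n) (\<lambda>x. disc_return R \<beta> (fst x) + \<beta> ^ n * vtr pol P R \<beta> m (snd x))"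
proof (induction n arbitrary: s)
  case 0
  then show ?case by (simp add: disc_return_def)
next
  case (Suc n)
  have *: "E (traj pol P s' n) (\<lambda>x. disc_return R \<beta> ((s,a) # fst x) + \<beta> ^ Suc n * vtr pol P R \<beta> m (snd x))
     = R s a + \<beta> * E (traj pol P s' n) (\<lambda>x. disc_return R \<beta> (fst x) + \<beta> ^ n * vtr pol P R \<beta> m (snd x))" for a s'
    by (subst E_lin[symmetric]) (simp_all add: dr_cons finite_traj algebra_simps)
  show ?case
    unfolding add_Suc vtr_Suc traj_Suc_E Suc fst_conv snd_conv * ..
qed

lemma bellman:
  fixes pol :: "'s::finite \<Rightarrow> 'a::finite pmf"
  assumes R: "\<And>s a. 0 \<le> R s a \<and> R s a \<le> 1" and b: "0 \<le> \<beta>" "\<beta> < 1"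
  shows "value_fun pol P R \<beta> s =
    E (traj pol P s n) (\<lambda>x. disc_return R \<beta> (fst x) + \<beta> ^ n * value_fun pol P R \<beta> (snd x))"
proof -
  let ?M = "traj pol P s n"
  have 1: "(\<lambda>m. vtr pol P R \<beta> (m + n) s) \<longlonglongrightarrow> value_fun pol P R \<beta> s"
    using LIMSEQ_ignore_initial_segment[OF vtr_conv[OF R b]] .
  have eq: "E ?M f = (\<Sum>a\<in>set_pmf ?M. f a * pmf ?M a)" for f
    by (rule integral_measure_pmf_real) (auto simp: finite_traj)
  have 2: "(\<lambda>m. vtr pol P R \<beta> (m + n) s) \<longlonglongrightarrow>
    E ?M (\<lambda>x. disc_return R \<beta> (fst x) + \<beta> ^ n * value_fun pol P R \<beta> (snd x))"
    unfolding add.commute[of _ n] vtr_add eq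
    by (intro tendsto_intros vtr_conv[OF R b])
  show ?thesis using LIMSEQ_unique[OF 1 2] .
qed

lemma traj_snd_Suc:
  "map_pmf snd (traj pol P s (Suc m)) = bind_pmf (chain_step pol P s) (\<lambda>s'. map_pmf snd (traj pol P s' m))"
  by (simp add: chain_step_def bind_assoc_pmf map_bind_pmf map_pmf_comp case_prod_unfold)

lemma stat_iter:
  assumes "stationary pol P lam"
  shows "bind_pmf lam (\<lambda>s. map_pmf snd (traj pol P s m)) = lam"
proof (induction m)
  case 0
  then show ?case by (simp add: bind_return_pmf')
next
  case (Suc m)
  have "bind_pmf lam (\<lambda>s. map_pmf snd (traj pol P s (Suc m)))
      = bind_pmf (bind_pmf lam (chain_step pol P)) (\<lambda>s'. map_pmf snd (traj pol P s' m))"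
    unfolding traj_snd_Suc bind_assoc_pmf ..
  also have "\<dots> = lam" using assms Suc by (simp add: stationary_def)
  finally show ?case .
qed

lemma E_finite_sum:
  fixes lam :: "'s::finite pmf"
  shows "E lam f = (\<Sum>s\<in>UNIV. pmf lam s * f s)"
  by (subst integral_measure_pmf_real[where A=UNIV]) (auto simp: mult_ac)

lemma stat_sum:
  fixes pol :: "'s::finite \<Rightarrow> 'a::finite pmf"
  assumes "stationary pol P lam"
  shows "(\<Sum>s\<in>UNIV. pmf lam s * E (traj pol P s n) (\<lambda>x. h (snd x))) = (\<Sum>s\<in>UNIV. pmf lam s * h s)"
proof -
  have "(\<Sum>s\<in>UNIV. pmf lam s * E (traj pol P s n) (\<lambda>x. h (snd x)))
     = E lam (\<lambda>s. E (map_pmf snd (traj pol P s n)) h)"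
    by (simp only: E_finite_sum[of lam] integral_map_pmf)
  also have "\<dots> = E (bind_pmf lam (\<lambda>s. map_pmf snd (traj pol P s n))) h"
    by (rule integral_bind_pmf_fin[symmetric]) auto
  also have "\<dots> = E lam h" using stat_iter[OF assms] by simp
  finally show ?thesis by (simp only: E_finite_sum[of lam])
qed

lemma E_var:
  assumes M: "finite (set_pmf M)"
  shows "E M (\<lambda>x. (f x - E M f)\<^sup>2) = E M (\<lambda>x. (f x)\<^sup>2) - (E M f)\<^sup>2"
proof -
  have "E M (\<lambda>x. (f x - c)\<^sup>2) = E M (\<lambda>x. (f x)\<^sup>2) - 2 * c * E M f + c\<^sup>2" for c
  proof -
    have "E M (\<lambda>x. (f x - c)\<^sup>2) = E M (\<lambda>x. (f x)\<^sup>2 + (- 2 * c) * f x + c\<^sup>2)"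
      by (simp add: power2_diff algebra_simps)
    also have "\<dots> = E M (\<lambda>x. (f x)\<^sup>2) - 2 * c * E M f + c\<^sup>2"
      by (simp add: integrable_measure_pmf_finite[OF M])
    finally show ?thesis .
  qed
  from this[of "E M f"] show ?thesis by (simp add: power2_eq_square)
qed

lemma E_var_le:
  assumes M: "finite (set_pmf M)"
  shows "E M (\<lambda>x. (f x - E M f)\<^sup>2) \<le> E M (\<lambda>x. (f x)\<^sup>2)"
  using E_var[OF M, of f] by simp

lemma E_jensen:
  assumes M: "finite (set_pmf M)"
  shows "(E M f)\<^sup>2 \<le> E M (\<lambda>x. (f x)\<^sup>2)"
proof -
  have "0 \<le> E M (\<lambda>x. (f x - E M f)\<^sup>2)" by simp
  then show ?thesis using E_var[OF M, of f] by simp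
qed

lemma sq_sum_le: "((p::real) + q)\<^sup>2 \<le> 2 * p\<^sup>2 + 2 * q\<^sup>2"
  using zero_le_power2[of "p - q"] by (simp add: power2_eq_square algebra_simps)

lemma core:
  fixes M :: "'x pmf" and G U W :: "'x \<Rightarrow> real"
  assumes M: "finite (set_pmf M)" and e0: "0 \<le> \<epsilon>" and e1: "\<epsilon> \<le> 1" and b: "0 \<le> b"
    and bell: "vs = E M (\<lambda>x. G x + b * W x)"
  shows "E M (\<lambda>x. (v + \<epsilon> * (G x + b * U x - v) - vs)\<^sup>2)
    \<le> ((1-\<epsilon>)\<^sup>2 + (1-\<epsilon>)*\<epsilon>*b) * (v - vs)\<^sup>2 + ((1-\<epsilon>)*\<epsilon>*b + 3*\<epsilon>\<^sup>2*b\<^sup>2) * E M (\<lambda>x. (U x - W x)\<^sup>2)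
      + 4*\<epsilon>\<^sup>2 * E M (\<lambda>x. (G x)\<^sup>2) + 4*\<epsilon>\<^sup>2*b\<^sup>2 * E M (\<lambda>x. (W x)\<^sup>2)"
proof -
  note int = integrable_measure_pmf_finite[OF M]
  define m where "m = E M (\<lambda>x. U x - W x)"
  define \<mu> where "\<mu> = (1-\<epsilon>)*(v-vs) + \<epsilon>*b*m"
  define p where "p x = \<epsilon> * (G x + b * W x - vs)" for x
  define q where "q x = \<epsilon> * b * ((U x - W x) - m)" for x
  have pt: "(v + \<epsilon> * (G x + b * U x - v) - vs)\<^sup>2 \<le> \<mu>\<^sup>2 + 2 * \<mu> * (p x + q x) + (2 * (p x)\<^sup>2 + 2 * (q x)\<^sup>2)" for x
  proof -
    have "v + \<epsilon> * (G x + b * U x - v) - vs = \<mu> + (p x + q x)"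
      by (simp add: \<mu>_def p_def q_def algebra_simps)
    then have "(v + \<epsilon> * (G x + b * U x - v) - vs)\<^sup>2 = \<mu>\<^sup>2 + 2 * \<mu> * (p x + q x) + (p x + q x)\<^sup>2"
      by (simp add: power2_eq_square algebra_simps)
    then show ?thesis using sq_sum_le[of "p x" "q x"] by linarith
  qed
  have Ep: "E M p = 0" unfolding p_def bell by (simp add: int)
  have Eq: "E M q = 0" unfolding q_def m_def by (simp add: int)
  have Ep2: "E M (\<lambda>x. (p x)\<^sup>2) \<le> \<epsilon>\<^sup>2 * (2 * E M (\<lambda>x. (G x)\<^sup>2) + 2 * b\<^sup>2 * E M (\<lambda>x. (W x)\<^sup>2))"
  proof -
    have "E M (\<lambda>x. (p x)\<^sup>2) = \<epsilon>\<^sup>2 * E M (\<lambda>x. (G x + b * W x - vs)\<^sup>2)"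
      unfolding p_def by (simp add: power_mult_distrib)
    also have "E M (\<lambda>x. (G x + b * W x - vs)\<^sup>2) \<le> E M (\<lambda>x. (G x + b * W x)\<^sup>2)"
      unfolding bell by (rule E_var_le[OF M])
    also have "\<dots> \<le> E M (\<lambda>x. 2 * (G x)\<^sup>2 + 2 * (b * W x)\<^sup>2)"
      by (intro E_mono M sq_sum_le)
    also have "\<dots> = 2 * E M (\<lambda>x. (G x)\<^sup>2) + 2 * b\<^sup>2 * E M (\<lambda>x. (W x)\<^sup>2)"
      by (simp add: int power_mult_distrib)
    finally show ?thesis by (simp add: mult_left_mono)
  qed
  have Eq2: "E M (\<lambda>x. (q x)\<^sup>2) \<le> \<epsilon>\<^sup>2 * b\<^sup>2 * E M (\<lambda>x. (U x - W x)\<^sup>2)"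
  proof -
    have "E M (\<lambda>x. (q x)\<^sup>2) = \<epsilon>\<^sup>2 * b\<^sup>2 * E M (\<lambda>x. (U x - W x - m)\<^sup>2)"
      unfolding q_def by (simp add: power_mult_distrib)
    also have "E M (\<lambda>x. (U x - W x - m)\<^sup>2) \<le> E M (\<lambda>x. (U x - W x)\<^sup>2)"
      unfolding m_def by (rule E_var_le[OF M])
    finally show ?thesis by (simp add: mult_left_mono)
  qed
  have m2: "m\<^sup>2 \<le> E M (\<lambda>x. (U x - W x)\<^sup>2)" unfolding m_def by (rule E_jensen[OF M])
  have "E M (\<lambda>x. (v + \<epsilon> * (G x + b * U x - v) - vs)\<^sup>2)
     \<le> E M (\<lambda>x. \<mu>\<^sup>2 + 2 * \<mu> * (p x + q x) + (2 * (p x)\<^sup>2 + 2 * (q x)\<^sup>2))"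
    by (intro E_mono M pt)
  also have "\<dots> = \<mu>\<^sup>2 + 2 * \<mu> * (E M p + E M q) + (2 * E M (\<lambda>x. (p x)\<^sup>2) + 2 * E M (\<lambda>x. (q x)\<^sup>2))"
    by (simp add: int)
  finally have main: "E M (\<lambda>x. (v + \<epsilon> * (G x + b * U x - v) - vs)\<^sup>2)
     \<le> \<mu>\<^sup>2 + (2 * E M (\<lambda>x. (p x)\<^sup>2) + 2 * E M (\<lambda>x. (q x)\<^sup>2))" using Ep Eq by simp
  have mu2: "\<mu>\<^sup>2 \<le> (1-\<epsilon>)\<^sup>2 * (v-vs)\<^sup>2 + (1-\<epsilon>)*\<epsilon>*b * ((v-vs)\<^sup>2 + m\<^sup>2) + \<epsilon>\<^sup>2*b\<^sup>2*m\<^sup>2"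
  proof -
    have "2 * (v-vs) * m \<le> (v-vs)\<^sup>2 + m\<^sup>2" using zero_le_power2[of "v - vs - m"]
      by (simp add: power2_eq_square algebra_simps)
    moreover have "0 \<le> (1-\<epsilon>)*\<epsilon>*b" using e0 e1 b by simp
    ultimately have "(1-\<epsilon>)*\<epsilon>*b * (2 * (v-vs) * m) \<le> (1-\<epsilon>)*\<epsilon>*b * ((v-vs)\<^sup>2 + m\<^sup>2)"
      by (rule mult_left_mono)
    then show ?thesis unfolding \<mu>_def by (simp add: power2_eq_square algebra_simps)
  qed
  have c1: "0 \<le> (1-\<epsilon>)*\<epsilon>*b + \<epsilon>\<^sup>2*b\<^sup>2" using e0 e1 b by simp
  have "(1-\<epsilon>)*\<epsilon>*b * m\<^sup>2 + \<epsilon>\<^sup>2*b\<^sup>2*m\<^sup>2 \<le> ((1-\<epsilon>)*\<epsilon>*b + \<epsilon>\<^sup>2*b\<^sup>2) * E M (\<lambda>x. (U x - W x)\<^sup>2)"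
    using mult_left_mono[OF m2 c1] by (simp add: algebra_simps)
  then show ?thesis using main mu2 Ep2 Eq2 by (simp add: algebra_simps power2_eq_square)
qed

lemma E_mono_supp:
  assumes "finite (set_pmf M)" "\<And>x. x \<in> set_pmf M \<Longrightarrow> f x \<le> g x"
  shows "E M f \<le> E M g"
  using assms by (intro integral_mono_AE AE_pmfI) (auto simp: integrable_measure_pmf_finite)

lemma dr_bound:
  assumes R: "\<And>s a. 0 \<le> R s a \<and> R s a \<le> 1" and b: "0 < \<beta>" "\<beta> < 1"
  shows "0 \<le> disc_return R \<beta> xs \<and> disc_return R \<beta> xs \<le> (1 - \<beta> ^ length xs) / (1 - \<beta>)"
proof -
  have "disc_return R \<beta> xs \<le> (\<Sum>t<length xs. \<beta> ^ t)"
    unfolding disc_return_def using R b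
    by (intro sum_mono) (auto intro: mult_left_le)
  also have "\<dots> = (1 - \<beta> ^ length xs) / (1 - \<beta>)" using b by (simp add: sum_gp_strict)
  finally show ?thesis unfolding disc_return_def using R b
    by (auto intro!: sum_nonneg)
qed

lemma finite_Pi_traj:
  fixes pol :: "'s::finite \<Rightarrow> 'a::finite pmf"
  shows "finite (set_pmf (Pi_pmf UNIV d (\<lambda>s. traj pol P s n)))"
  by (rule finite_subset[OF set_Pi_pmf_subset'[of UNIV]]) (auto simp: finite_traj)

lemma Pi_comp:
  fixes pol :: "'s::finite \<Rightarrow> 'a::finite pmf"
  shows "E (Pi_pmf UNIV d (\<lambda>s. traj pol P s n)) (\<lambda>tr. g (tr s)) = E (traj pol P s n) g"
proof -
  have "E (traj pol P s n) g = E (map_pmf (\<lambda>f. f s) (Pi_pmf UNIV d (\<lambda>s. traj pol P s n))) g"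
    by (subst Pi_pmf_component) auto
  then show ?thesis by simp
qed

lemma finite_td_step:
  fixes pol :: "'s::finite \<Rightarrow> 'a::finite pmf"
  shows "finite (set_pmf (td_step pol P R \<beta> n eps V))"
  unfolding td_step_def by (simp add: finite_Pi_traj)

lemma finite_td_iter:
  fixes pol :: "'s::finite \<Rightarrow> 'a::finite pmf"
  shows "finite (set_pmf (td_iter pol P R \<beta> n eps V0 k))"
  by (induction k) (auto simp: finite_td_step)

lemma td_step_E:
  fixes pol :: "'s::finite \<Rightarrow> 'a::finite pmf"
  shows "E (td_step pol P R \<beta> n eps V) (\<lambda>W. lnorm_sq lam (\<lambda>s. W s - Vs s))
    = (\<Sum>s\<in>UNIV. pmf lam s * E (traj pol P s n)
        (\<lambda>x. (V s + eps * (disc_return R \<beta> (fst x) + \<beta> ^ n * V (snd x) - V s) - Vs s)\<^sup>2))"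
proof -
  define h where "h s x = (V s + eps * (disc_return R \<beta> (fst x) + \<beta> ^ n * V (snd x) - V s) - Vs s)\<^sup>2" for s x
  let ?Pi = "Pi_pmf UNIV undefined (\<lambda>s. traj pol P s n)"
  have "E (td_step pol P R \<beta> n eps V) (\<lambda>W. lnorm_sq lam (\<lambda>s. W s - Vs s))
      = E ?Pi (\<lambda>x. \<Sum>s\<in>UNIV. pmf lam s * h s (x s))"
    unfolding td_step_def lnorm_sq_def integral_map_pmf h_def ..
  also have "\<dots> = (\<Sum>s\<in>UNIV. E ?Pi (\<lambda>x. pmf lam s * h s (x s)))"
    by (rule Bochner_Integration.integral_sum) (simp add: integrable_measure_pmf_finite finite_Pi_traj)
  also have "\<dots> = (\<Sum>s\<in>UNIV. pmf lam s * E ?Pi (\<lambda>x. h s (x s)))"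
    by simp
  also have "\<dots> = (\<Sum>s\<in>UNIV. pmf lam s * E (traj pol P s n) (h s))"
    by (simp only: Pi_comp)
  finally show ?thesis unfolding h_def .
qed

lemma step_bound:
  fixes pol :: "'s::finite \<Rightarrow> 'a::finite pmf"
  assumes R: "\<And>s a. 0 \<le> R s a \<and> R s a \<le> 1" and b: "0 < \<beta>" "\<beta> < 1"
    and stat: "stationary pol P lam" and e0: "0 \<le> eps" and e1: "eps \<le> 1"
  shows "E (td_step pol P R \<beta> n eps V) (\<lambda>W. lnorm_sq lam (\<lambda>s. W s - value_fun pol P R \<beta> s))
    \<le> ((1-eps)\<^sup>2 + 2*(1-eps)*eps*\<beta>^n + 3*eps\<^sup>2*(\<beta>^n)\<^sup>2) * lnorm_sq lam (\<lambda>s. V s - value_fun pol P R \<beta> s)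
      + 4*eps\<^sup>2*((1-\<beta>^n)/(1-\<beta>))\<^sup>2 + 4*eps\<^sup>2*(\<beta>^n)\<^sup>2*lnorm_sq lam (value_fun pol P R \<beta>)"
proof -
  define Vs where "Vs = value_fun pol P R \<beta>"
  define C1 where "C1 = ((1-\<beta>^n)/(1-\<beta>))\<^sup>2"
  define A where "A = (1-eps)\<^sup>2 + (1-eps)*eps*\<beta>^n"
  define B where "B = (1-eps)*eps*\<beta>^n + 3*eps\<^sup>2*(\<beta>^n)\<^sup>2"
  define a where "a s = (V s - Vs s)\<^sup>2" for s
  define Q where "Q s = E (traj pol P s n) (\<lambda>x. (V (snd x) - Vs (snd x))\<^sup>2)" for s
  define g where "g s = E (traj pol P s n) (\<lambda>x. (disc_return R \<beta> (fst x))\<^sup>2)" for s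
  define w where "w s = E (traj pol P s n) (\<lambda>x. (Vs (snd x))\<^sup>2)" for s
  have bn: "0 \<le> \<beta>^n" using b by simp
  have each: "E (traj pol P s n)
        (\<lambda>x. (V s + eps * (disc_return R \<beta> (fst x) + \<beta> ^ n * V (snd x) - V s) - Vs s)\<^sup>2)
      \<le> A * a s + B * Q s + 4*eps\<^sup>2 * g s + 4*eps\<^sup>2*(\<beta>^n)\<^sup>2 * w s" for s
    unfolding A_def B_def a_def Q_def g_def w_def
    by (rule core[OF finite_traj e0 e1 bn]) (use bellman[of R \<beta> pol P s n] R b in \<open>simp add: Vs_def\<close>)
  have g: "g s \<le> C1" for s
  proof -
    have "g s \<le> E (traj pol P s n) (\<lambda>x. C1)"
      unfolding g_def C1_def
    proof (rule E_mono_supp[OF finite_traj])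
      fix x assume "x \<in> set_pmf (traj pol P s n)"
      then have "length (fst x) = n" by (rule traj_len)
      then show "(disc_return R \<beta> (fst x))\<^sup>2 \<le> ((1 - \<beta> ^ n) / (1 - \<beta>))\<^sup>2"
        using dr_bound[OF R b, where xs="fst x"] by (intro power_mono) auto
    qed
    then show ?thesis by simp
  qed
  have sQ: "(\<Sum>s\<in>UNIV. pmf lam s * Q s) = (\<Sum>s\<in>UNIV. pmf lam s * a s)"
    unfolding Q_def a_def using stat_sum[OF stat, of n "\<lambda>s'. (V s' - Vs s')\<^sup>2"] by simp
  have sw: "(\<Sum>s\<in>UNIV. pmf lam s * w s) = lnorm_sq lam Vs"
    unfolding w_def lnorm_sq_def using stat_sum[OF stat, of n "\<lambda>s'. (Vs s')\<^sup>2"] by simp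
  have sg: "(\<Sum>s\<in>UNIV. pmf lam s * g s) \<le> C1"
  proof -
    have "(\<Sum>s\<in>UNIV. pmf lam s * g s) \<le> (\<Sum>s\<in>UNIV. pmf lam s * C1)"
      by (intro sum_mono mult_left_mono g) auto
    also have "\<dots> = C1" by (simp add: sum_distrib_right[symmetric] sum_pmf_eq_1)
    finally show ?thesis .
  qed
  have "E (td_step pol P R \<beta> n eps V) (\<lambda>W. lnorm_sq lam (\<lambda>s. W s - Vs s))
      \<le> (\<Sum>s\<in>UNIV. pmf lam s * (A * a s + B * Q s + 4*eps\<^sup>2 * g s + 4*eps\<^sup>2*(\<beta>^n)\<^sup>2 * w s))"
    unfolding td_step_E by (intro sum_mono mult_left_mono each) auto
  also have "\<dots> = A * (\<Sum>s\<in>UNIV. pmf lam s * a s) + B * (\<Sum>s\<in>UNIV. pmf lam s * Q s)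
      + 4*eps\<^sup>2 * (\<Sum>s\<in>UNIV. pmf lam s * g s) + 4*eps\<^sup>2*(\<beta>^n)\<^sup>2 * (\<Sum>s\<in>UNIV. pmf lam s * w s)"
    by (simp add: sum.distrib sum_distrib_left algebra_simps)
  also have "\<dots> \<le> (A + B) * lnorm_sq lam (\<lambda>s. V s - Vs s) + 4*eps\<^sup>2 * C1 + 4*eps\<^sup>2*(\<beta>^n)\<^sup>2 * lnorm_sq lam Vs"
  proof -
    have la: "(\<Sum>s\<in>UNIV. pmf lam s * a s) = lnorm_sq lam (\<lambda>s. V s - Vs s)"
      by (simp add: a_def lnorm_sq_def)
    have "4*eps\<^sup>2 * (\<Sum>s\<in>UNIV. pmf lam s * g s) \<le> 4*eps\<^sup>2 * C1"
      using sg by (intro mult_left_mono) auto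
    then show ?thesis unfolding sQ sw la by (simp add: distrib_right)
  qed
  finally show ?thesis unfolding A_def B_def C1_def Vs_def by (simp add: algebra_simps)
qed

lemma lnorm_sq_nonneg: "0 \<le> lnorm_sq lam V"
  unfolding lnorm_sq_def by (intro sum_nonneg mult_nonneg_nonneg) auto

theorem theorem4:
  fixes pol :: "'s::finite \<Rightarrow> 'a::finite pmf"
    and P :: "'s \<Rightarrow> 'a \<Rightarrow> 's pmf"
    and R :: "'s \<Rightarrow> 'a \<Rightarrow> real"
    and \<beta> eps :: real and n :: nat
    and lam :: "'s pmf" and V0 :: "'s \<Rightarrow> real"
  assumes R_range: "\<And>s a. 0 \<le> R s a \<and> R s a \<le> 1"
    and beta: "0 < \<beta>" "\<beta> < 1"
    and n: "n \<ge> 1"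
    and lam_stat: "stationary pol P lam"
    and lam_unique: "\<And>mu. stationary pol P mu \<Longrightarrow> mu = lam"
    and lam_pos: "\<And>s. pmf lam s > 0"
    and eps_pos: "0 < eps"
    and eps_le: "eps \<le> (1 - \<beta> ^ n) / (16 * (1 + \<beta> ^ (2 * n)))"
  shows "\<forall>k. measure_pmf.expectation (td_iter pol P R \<beta> n eps V0 k)
                (\<lambda>V. lnorm_sq lam (\<lambda>s. V s - value_fun pol P R \<beta> s))
           \<le> lnorm_sq lam (\<lambda>s. V0 s - value_fun pol P R \<beta> s) * (1 - (1 - \<beta> ^ n) * eps) ^ k
             + 8 / (1 - \<beta> ^ n) * ((1 - \<beta> ^ n)\<^sup>2 / (1 - \<beta>)\<^sup>2
                 + 2 * \<beta> ^ (2 * n) * lnorm_sq lam (value_fun pol P R \<beta>)) * eps"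
proof
  fix k
  define Vs where "Vs = value_fun pol P R \<beta>"
  define F where "F V = lnorm_sq lam (\<lambda>s. V s - Vs s)" for V
  define b where "b = \<beta> ^ n"
  define c where "c = 1 - \<beta> ^ n"
  define C1 where "C1 = (c / (1 - \<beta>))\<^sup>2"
  define D where "D = 4 * C1 + 4 * b\<^sup>2 * lnorm_sq lam Vs"
  define \<rho> where "\<rho> = 1 - c * eps"
  have b0: "0 < b" using beta by (simp add: b_def)
  have b1: "b < 1" using beta n by (simp add: b_def power_less_one_iff)
  have c0: "0 < c" "c \<le> 1" using b0 b1 by (auto simp: c_def b_def)
  have b2n: "\<beta> ^ (2 * n) = b\<^sup>2" by (simp add: b_def power_mult[symmetric] mult.commute)
  have epsc: "eps * (16 * (1 + b\<^sup>2)) \<le> c"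
    using eps_le b0 unfolding b2n c_def[symmetric] by (simp add: pos_le_divide_eq add_pos_pos)
  have e1: "eps \<le> 1"
  proof -
    have "eps * 16 \<le> eps * (16 * (1 + b\<^sup>2))" using eps_pos by (intro mult_left_mono) auto
    then show ?thesis using epsc c0 by linarith
  qed
  have key: "eps * (c\<^sup>2 + 2 * b\<^sup>2) \<le> c"
  proof -
    have "c\<^sup>2 \<le> 1" using c0 by (simp add: power_le_one)
    then have "c\<^sup>2 + 2 * b\<^sup>2 \<le> 16 * (1 + b\<^sup>2)" using zero_le_power2[of b] by (smt (verit))
    then have "eps * (c\<^sup>2 + 2 * b\<^sup>2) \<le> eps * (16 * (1 + b\<^sup>2))" using eps_pos by (intro mult_left_mono) auto
    then show ?thesis using epsc by linarith
  qed
  have K: "(1-eps)\<^sup>2 + 2*(1-eps)*eps*b + 3*eps\<^sup>2*b\<^sup>2 \<le> \<rho>"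
  proof -
    have "(1-eps)\<^sup>2 + 2*(1-eps)*eps*b + 3*eps\<^sup>2*b\<^sup>2 = \<rho> - eps * (c - eps * (c\<^sup>2 + 2 * b\<^sup>2))"
      by (simp add: \<rho>_def c_def b_def[symmetric] power2_eq_square algebra_simps)
    moreover have "0 \<le> eps * (c - eps * (c\<^sup>2 + 2 * b\<^sup>2))" using key eps_pos by simp
    ultimately show ?thesis by linarith
  qed
  have rho0: "0 \<le> \<rho>" using e1 c0 unfolding \<rho>_def
    using mult_mono[of c 1 eps 1] eps_pos by linarith
  have F0: "0 \<le> F V" for V unfolding F_def by (rule lnorm_sq_nonneg)
  have D0: "0 \<le> D" unfolding D_def C1_def using lnorm_sq_nonneg[of lam Vs] by simp
  have step: "E (td_step pol P R \<beta> n eps V) F \<le> \<rho> * F V + eps\<^sup>2 * D" for V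
  proof -
    have "E (td_step pol P R \<beta> n eps V) F
        \<le> ((1-eps)\<^sup>2 + 2*(1-eps)*eps*b + 3*eps\<^sup>2*b\<^sup>2) * F V + eps\<^sup>2 * D"
    proof -
      have sb: "E (td_step pol P R \<beta> n eps V) (\<lambda>W. lnorm_sq lam (\<lambda>s. W s - value_fun pol P R \<beta> s))
        \<le> ((1-eps)\<^sup>2 + 2*(1-eps)*eps*\<beta>^n + 3*eps\<^sup>2*(\<beta>^n)\<^sup>2) * lnorm_sq lam (\<lambda>s. V s - value_fun pol P R \<beta> s)
          + 4*eps\<^sup>2*((1-\<beta>^n)/(1-\<beta>))\<^sup>2 + 4*eps\<^sup>2*(\<beta>^n)\<^sup>2*lnorm_sq lam (value_fun pol P R \<beta>)"
        by (rule step_bound) (use R_range beta lam_stat e1 eps_pos in auto)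
      show ?thesis using sb
        unfolding F_def D_def C1_def Vs_def b_def c_def by (simp add: algebra_simps)
    qed
    also have "\<dots> \<le> \<rho> * F V + eps\<^sup>2 * D" using K F0[of V] by (intro add_right_mono mult_right_mono)
    finally show ?thesis .
  qed
  have main: "E (td_iter pol P R \<beta> n eps V0 k) F \<le> F V0 * \<rho> ^ k + eps * D / c"
  proof (induction k)
    case 0
    then show ?case using D0 c0 eps_pos by simp
  next
    case (Suc k)
    have "E (td_iter pol P R \<beta> n eps V0 (Suc k)) F
        = E (td_iter pol P R \<beta> n eps V0 k) (\<lambda>V. E (td_step pol P R \<beta> n eps V) F)"
      by (simp add: integral_bind_pmf_fin finite_td_iter finite_td_step)
    also have "\<dots> \<le> E (td_iter pol P R \<beta> n eps V0 k) (\<lambda>V. eps\<^sup>2 * D + \<rho> * F V)"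
      by (intro E_mono finite_td_iter) (use step in \<open>simp add: add.commute\<close>)
    also have "\<dots> = eps\<^sup>2 * D + \<rho> * E (td_iter pol P R \<beta> n eps V0 k) F"
      by (rule E_lin[OF finite_td_iter])
    also have "\<dots> \<le> eps\<^sup>2 * D + \<rho> * (F V0 * \<rho> ^ k + eps * D / c)"
      using Suc rho0 by (intro add_left_mono mult_left_mono) auto
    also have "\<dots> = F V0 * \<rho> ^ Suc k + eps * D / c"
      using c0 by (simp add: \<rho>_def field_simps power2_eq_square)
    finally show ?case .
  qed
  have fin: "eps * D / c \<le> 8 / c * (c\<^sup>2 / (1 - \<beta>)\<^sup>2 + 2 * b\<^sup>2 * lnorm_sq lam Vs) * eps"
  proof -
    have "D \<le> 8 * (c\<^sup>2 / (1 - \<beta>)\<^sup>2 + 2 * b\<^sup>2 * lnorm_sq lam Vs)"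
    proof -
      define X where "X = c\<^sup>2 / (1 - \<beta>)\<^sup>2"
      define Y where "Y = b\<^sup>2 * lnorm_sq lam Vs"
      have "0 \<le> X" by (simp add: X_def)
      moreover have "0 \<le> Y" by (simp add: lnorm_sq_nonneg Y_def)
      ultimately have "4 * X + 4 * Y \<le> 8 * (X + 2 * Y)" by (simp add: algebra_simps)
      then show ?thesis unfolding D_def C1_def power_divide X_def Y_def by (simp add: mult.assoc)
    qed
    then have "eps * D / c \<le> eps * (8 * (c\<^sup>2 / (1 - \<beta>)\<^sup>2 + 2 * b\<^sup>2 * lnorm_sq lam Vs)) / c"
      using eps_pos c0 by (intro divide_right_mono mult_left_mono) auto
    then show ?thesis by (simp add: field_simps)
  qed
  show "E (td_iter pol P R \<beta> n eps V0 k) (\<lambda>V. lnorm_sq lam (\<lambda>s. V s - value_fun pol P R \<beta> s))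
           \<le> lnorm_sq lam (\<lambda>s. V0 s - value_fun pol P R \<beta> s) * (1 - (1 - \<beta> ^ n) * eps) ^ k
             + 8 / (1 - \<beta> ^ n) * ((1 - \<beta> ^ n)\<^sup>2 / (1 - \<beta>)\<^sup>2
                 + 2 * \<beta> ^ (2 * n) * lnorm_sq lam (value_fun pol P R \<beta>)) * eps"
    using main fin unfolding F_def Vs_def \<rho>_def c_def b2n b_def by simp
qed

end
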